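(* Let $A\in\mathbb{R}^{M\times M}$ be symmetric with eigenvalues $\lambda_1,\ldots,\lambda_M\in\mathbb{R}$, let $k_n,k_p,k_u>0$, and define the symmetric matrix $$Q=\begin{pmatrix}\frac{k_p}{k_n}A&0&\frac{I_M}{2k_n}\\0&\frac{k_p}{k_n}A&\frac{k_u}{2k_n}A\\\frac{I_M}{2k_n}&\frac{k_u}{2k_n}A&k_uA\end{pmatrix}.$$ Then: (1) the $3M$ eigenvalues of $Q$ are, for $i=1,\ldots,M$, $$\mu_1(\lambda_i)=\frac{k_p}{k_n}\lambda_i,\quad \mu_2(\lambda_i)=\frac{\lambda_ik_1-\sqrt{1+\lambda_i^2k_2}}{2k_n},\quad \mu_3(\lambda_i)=\frac{\lambda_ik_1+\sqrt{1+\lambda_i^2k_2}}{2k_n},$$ with $k_1=k_p+k_nk_u>0$ and $k_2=k_u^2+(k_p-k_nk_u)^2>0$; (2) if $\lambda_1\le\lambda_2\le\cdots\le\lambda_M<0$ and $k_n$ is such that $\lambda_M^2(4k_nk_pk_u-k_u^2)>1$, then $\mu_j(\lambda_i)<0$ for all $j=1,2,3$ and $i=1,\ldots,M$, and $\mu_3(\lambda_M)=\max_{j\in\{1,2,3\},\,i\in\{1,\ldots,M\}}\mu_j(\lambda_i)$. *)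

theory Defs
  imports "Jordan_Normal_Form.Char_Poly"
begin

definition Q_block :: "real \<Rightarrow> real \<Rightarrow> real \<Rightarrow> nat \<Rightarrow> real mat \<Rightarrow> nat \<Rightarrow> nat \<Rightarrow> real mat" where
  "Q_block kn kp ku M A r s =
     (if r = 0 \<and> s = 0 then (kp / kn) \<cdot>\<^sub>m A
      else if r = 1 \<and> s = 1 then (kp / kn) \<cdot>\<^sub>m A
      else if r = 2 \<and> s = 2 then ku \<cdot>\<^sub>m A
      else if (r = 0 \<and> s = 2) \<or> (r = 2 \<and> s = 0) then (1 / (2 * kn)) \<cdot>\<^sub>m 1\<^sub>m M
      else if (r = 1 \<and> s = 2) \<or> (r = 2 \<and> s = 1) then (ku / (2 * kn)) \<cdot>\<^sub>m A
      else 0\<^sub>m M M)"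

definition Q_mat :: "real \<Rightarrow> real \<Rightarrow> real \<Rightarrow> nat \<Rightarrow> real mat \<Rightarrow> real mat" where
  "Q_mat kn kp ku M A =
     mat (3 * M) (3 * M) (\<lambda>(i, j). Q_block kn kp ku M A (i div M) (j div M) $$ (i mod M, j mod M))"

definition k1 :: "real \<Rightarrow> real \<Rightarrow> real \<Rightarrow> real" where
  "k1 kn kp ku = kp + kn * ku"

definition k2 :: "real \<Rightarrow> real \<Rightarrow> real \<Rightarrow> real" where
  "k2 kn kp ku = ku\<^sup>2 + (kp - kn * ku)\<^sup>2"

definition mu :: "real \<Rightarrow> real \<Rightarrow> real \<Rightarrow> nat \<Rightarrow> real \<Rightarrow> real" where
  "mu kn kp ku j l =
     (if j = 1 then (kp / kn) * l
      else if j = 2 then (l * k1 kn kp ku - sqrt (1 + l\<^sup>2 * k2 kn kp ku)) / (2 * kn)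
      else (l * k1 kn kp ku + sqrt (1 + l\<^sup>2 * k2 kn kp ku)) / (2 * kn))"

end

theory Submission
  imports Defs "Jordan_Normal_Form.Schur_Decomposition"
begin


lemma det_mat1: "det (mat 1 1 f) = (f (0,0) :: 'a :: comm_ring_1)"
  by (subst laplace_expansion_row[of _ 1 0], auto simp: cofactor_def mat_delete_def)

lemma det_mat2: "det (mat 2 2 f) = (f (0,0) * f (1,1) - f (0,1) * f(1,0) :: 'a :: comm_ring_1)"
  apply (subst laplace_expansion_row[of _ 2 0], auto simp: cofactor_def mat_delete_def numeral_2_eq_2)
  apply (subst laplace_expansion_row[of _ 1 0], auto simp: cofactor_def mat_delete_def)+
  done

lemma det_mat2': "det (mat (Suc (Suc 0)) (Suc (Suc 0)) f) = (f (0,0) * f (1,1) - f (0,1) * f(1,0) :: 'a :: comm_ring_1)"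
  using det_mat2[of f] by (simp add: numeral_2_eq_2)

lemma det_mat3: "det (mat 3 3 f) = (f (0,0) * (f (1,1) * f (2,2) - f (1,2) * f(2,1))
   - f (0,1) * (f (1,0) * f (2,2) - f (1,2) * f(2,0)) + f (0,2) * (f (1,0) * f (2,1) - f (1,1) * f(2,0)) :: 'a :: comm_ring_1)"
proof -
  have e: "(3::nat) - 1 = 2" by simp
  show ?thesis
  apply (subst laplace_expansion_row[of _ 3 0], simp, simp)
  apply (simp add: cofactor_def mat_delete_def e det_mat2 det_mat2' numeral_3_eq_3 lessThan_Suc)
    apply (simp add: numeral_2_eq_2 algebra_simps)
  done
qed


definition Kmat :: "nat \<Rightarrow> (nat \<Rightarrow> nat \<Rightarrow> nat \<Rightarrow> nat \<Rightarrow> 'a :: idom) \<Rightarrow> 'a mat" where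
  "Kmat n g = mat (3*n) (3*n) (\<lambda>(i,j). g (i mod 3) (j mod 3) (i div 3) (j div 3))"

lemma Kmat_Suc: "Kmat (Suc n) g = four_block_mat (mat 3 3 (\<lambda>(r,s). g r s 0 0))
    (mat 3 (3*n) (\<lambda>(i,j). g i (j mod 3) 0 (Suc (j div 3))))
    (mat (3*n) 3 (\<lambda>(i,j). g (i mod 3) j (Suc (i div 3)) 0))
    (Kmat n (\<lambda>r s a b. g r s (Suc a) (Suc b)))"
proof (rule eq_matI)
  fix i j assume i: "i < dim_row (four_block_mat (mat 3 3 (\<lambda>(r,s). g r s 0 0))
    (mat 3 (3*n) (\<lambda>(i,j). g i (j mod 3) 0 (Suc (j div 3))))
    (mat (3*n) 3 (\<lambda>(i,j). g (i mod 3) j (Suc (i div 3)) 0))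
    (Kmat n (\<lambda>r s a b. g r s (Suc a) (Suc b))))"
   and j: "j < dim_col (four_block_mat (mat 3 3 (\<lambda>(r,s). g r s 0 0))
    (mat 3 (3*n) (\<lambda>(i,j). g i (j mod 3) 0 (Suc (j div 3))))
    (mat (3*n) 3 (\<lambda>(i,j). g (i mod 3) j (Suc (i div 3)) 0))
    (Kmat n (\<lambda>r s a b. g r s (Suc a) (Suc b))))"
  then have i: "i < 3 + 3 * n" and j: "j < 3 + 3*n" by (auto simp: Kmat_def)
  have d: "k \<ge> 3 \<Longrightarrow> (k - 3) mod 3 = k mod 3 \<and> Suc ((k - 3) div 3) = k div 3" for k :: nat
    by (simp add: le_div_geq le_mod_geq)
  show "Kmat (Suc n) g $$ (i, j) = four_block_mat (mat 3 3 (\<lambda>(r,s). g r s 0 0))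
    (mat 3 (3*n) (\<lambda>(i,j). g i (j mod 3) 0 (Suc (j div 3))))
    (mat (3*n) 3 (\<lambda>(i,j). g (i mod 3) j (Suc (i div 3)) 0))
    (Kmat n (\<lambda>r s a b. g r s (Suc a) (Suc b))) $$ (i, j)"
    using i j d[of i] d[of j] by (auto simp: Kmat_def four_block_mat_def)
qed (auto simp: Kmat_def)

lemma det_Kmat: "(\<And>r s a b. b < a \<Longrightarrow> a < n \<Longrightarrow> g r s a b = 0) \<Longrightarrow>
   det (Kmat n g) = (\<Prod>l<n. det (mat 3 3 (\<lambda>(r,s). g r s l l)))"
proof (induction n arbitrary: g)
  case 0
  then show ?case by (simp add: Kmat_def)
next
  case (Suc n)
  have z: "mat (3*n) 3 (\<lambda>(i,j). g (i mod 3) j (Suc (i div 3)) 0) = 0\<^sub>m (3*n) 3"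
    by (rule eq_matI, auto intro!: Suc.prems)
  have "det (Kmat (Suc n) g) = det (mat 3 3 (\<lambda>(r,s). g r s 0 0)) * det (Kmat n (\<lambda>r s a b. g r s (Suc a) (Suc b)))"
    unfolding Kmat_Suc z
    by (rule det_four_block_mat_lower_left_zero[of _ 3 _ "3*n"], auto simp: Kmat_def)
  also have "det (Kmat n (\<lambda>r s a b. g r s (Suc a) (Suc b))) = (\<Prod>l<n. det (mat 3 3 (\<lambda>(r,s). g r s (Suc l) (Suc l))))"
    by (rule Suc.IH, rule Suc.prems, auto)
  finally show ?case by (simp del: prod.lessThan_Suc add: prod.lessThan_Suc_shift)
qed



lemma det_perm_sym:
  fixes X :: "'a :: comm_ring_1 mat"
  assumes X: "X \<in> carrier_mat n n" and s: "\<And>i. i < n \<Longrightarrow> \<sigma> i < n" and inj: "inj_on \<sigma> {..<n}"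
  shows "det (mat n n (\<lambda>(i,j). X $$ (\<sigma> i, \<sigma> j))) = det X"
proof -
  define Pm :: "'a mat" where "Pm = mat n n (\<lambda>(i,j). if \<sigma> i = j then 1 else 0)"
  have Pm: "Pm \<in> carrier_mat n n" by (simp add: Pm_def)
  have d: "(\<Sum>j = 0..<n. (if \<sigma> i = j then 1 else 0) * f j) = (f (\<sigma> i) :: 'a)" if "i < n" for i f
  proof -
    have "(\<Sum>j = 0..<n. (if \<sigma> i = j then 1 else 0) * f j) = (\<Sum>j = 0..<n. if \<sigma> i = j then f j else 0)"
      by (rule sum.cong, auto)
    then show ?thesis using s[OF that] by (simp add: sum.delta)
  qed
  have d2: "(\<Sum>j = 0..<n. f j * (if \<sigma> i = j then 1 else 0)) = (f (\<sigma> i) :: 'a)" if "i < n" for i f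
  proof -
    have "(\<Sum>j = 0..<n. f j * (if \<sigma> i = j then 1 else 0)) = (\<Sum>j = 0..<n. if \<sigma> i = j then f j else 0)"
      by (rule sum.cong, auto)
    then show ?thesis using s[OF that] by (simp add: sum.delta)
  qed
  have PX: "Pm * X = mat n n (\<lambda>(i,k). X $$ (\<sigma> i, k))"
    by (rule eq_matI, insert X, auto simp: Pm_def scalar_prod_def d)
  have PXP: "Pm * X * transpose_mat Pm = mat n n (\<lambda>(i,j). X $$ (\<sigma> i, \<sigma> j))"
    unfolding PX by (rule eq_matI, auto simp: Pm_def scalar_prod_def d2)
  have PP: "Pm * transpose_mat Pm = 1\<^sub>m n"
  proof (rule eq_matI)
    fix i j assume "i < dim_row (1\<^sub>m n :: 'a mat)" "j < dim_col (1\<^sub>m n :: 'a mat)"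
    then have ij: "i < n" "j < n" by auto
    have "(Pm * transpose_mat Pm) $$ (i,j) = (\<Sum>k = 0..<n. (if \<sigma> i = k then 1 else 0) * (if \<sigma> j = k then 1 else 0))"
      using ij by (simp add: Pm_def scalar_prod_def)
    also have "\<dots> = (if \<sigma> j = \<sigma> i then 1 else 0)"
      using d[OF ij(1), of "\<lambda>k. if \<sigma> j = k then 1 else 0"] by simp
    also have "\<dots> = (if i = j then 1 else 0)" using inj ij by (auto dest: inj_onD)
    finally show "(Pm * transpose_mat Pm) $$ (i,j) = 1\<^sub>m n $$ (i,j)" using ij by simp
  qed (auto simp: Pm_def)
  have "det Pm * det Pm = 1"
    using arg_cong[OF PP, of det] det_mult[OF Pm, of "transpose_mat Pm"] det_transpose[OF Pm] Pm by simp
  moreover have "det (Pm * X * transpose_mat Pm) = det Pm * det X * det Pm"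
    using det_mult[OF Pm X] det_mult[of "Pm * X" n "transpose_mat Pm"] det_transpose[OF Pm] Pm X by simp
  ultimately show ?thesis unfolding PXP by (metis mult.assoc mult.commute mult_1)
qed



definition blk3 :: "nat \<Rightarrow> (nat \<Rightarrow> nat \<Rightarrow> 'a mat) \<Rightarrow> 'a mat" where
  "blk3 M F = mat (3*M) (3*M) (\<lambda>(i,j). F (i div M) (j div M) $$ (i mod M, j mod M))"

lemma sum_blocks:
  fixes M :: nat
  assumes "M > 0"
  shows "(\<Sum>k = 0..<3*M. f (k div M) (k mod M)) = (\<Sum>t<3. \<Sum>l = 0..<M. f t l :: 'a :: comm_monoid_add)"
proof -
  have "(\<Sum>k = 0..<3*M. f (k div M) (k mod M)) = (\<Sum>t<3. \<Sum>k = t*M..<t*M+M. f (k div M) (k mod M))"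
    using sum.nat_group[of "\<lambda>k. f (k div M) (k mod M)" M 3] by (simp add: atLeast0LessThan)
  also have "\<dots> = (\<Sum>t<3. \<Sum>l = 0..<M. f t l)"
  proof (rule sum.cong[OF refl])
    fix t
    have "(\<Sum>k = t*M..<t*M+M. f (k div M) (k mod M)) = (\<Sum>l = 0..<M. f ((l + t*M) div M) ((l + t*M) mod M))"
      using sum.shift_bounds_nat_ivl[of "\<lambda>k. f (k div M) (k mod M)" 0 "t*M" M] by (simp add: add.commute)
    also have "\<dots> = (\<Sum>l = 0..<M. f t l)"
      using assms by (intro sum.cong, auto)
    finally show "(\<Sum>k = t*M..<t*M+M. f (k div M) (k mod M)) = (\<Sum>l = 0..<M. f t l)" .
  qed
  finally show ?thesis .
qed

lemma sum3: "(\<Sum>t<(3::nat). f t) = f 0 + f 1 + (f 2 :: 'a :: comm_monoid_add)"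
  by (simp add: numeral_3_eq_3 lessThan_Suc numeral_2_eq_2 add.commute add.left_commute)

lemma blk3_carrier[simp]: "blk3 M F \<in> carrier_mat (3*M) (3*M)"
  by (simp add: blk3_def)

lemma blk3_mult:
  fixes F G :: "nat \<Rightarrow> nat \<Rightarrow> 'a :: comm_semiring_1 mat"
  assumes F: "\<And>r s. F r s \<in> carrier_mat M M" and G: "\<And>r s. G r s \<in> carrier_mat M M"
  shows "blk3 M F * blk3 M G = blk3 M (\<lambda>r s. F r 0 * G 0 s + F r 1 * G 1 s + F r 2 * G 2 s)"
proof (rule eq_matI)
  fix i j assume "i < dim_row (blk3 M (\<lambda>r s. F r 0 * G 0 s + F r 1 * G 1 s + F r 2 * G 2 s))"
     "j < dim_col (blk3 M (\<lambda>r s. F r 0 * G 0 s + F r 1 * G 1 s + F r 2 * G 2 s))"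
  then have ij: "i < 3*M" "j < 3*M" by (auto simp: blk3_def)
  then have M: "M > 0" by auto
  have im: "i mod M < M" "j mod M < M" using M by auto
  have dims: "dim_row (F r s) = M" "dim_col (F r s) = M" "dim_row (G r s) = M" "dim_col (G r s) = M" for r s
    using F[of r s] G[of r s] by auto
  have "(blk3 M F * blk3 M G) $$ (i,j) = (\<Sum>k = 0..<3*M. F (i div M) (k div M) $$ (i mod M, k mod M) * G (k div M) (j div M) $$ (k mod M, j mod M))"
    using ij by (simp add: blk3_def scalar_prod_def)
  also have "\<dots> = (\<Sum>t<3. \<Sum>l = 0..<M. F (i div M) t $$ (i mod M, l) * G t (j div M) $$ (l, j mod M))"
    by (rule sum_blocks[OF M])
  also have "\<dots> = blk3 M (\<lambda>r s. F r 0 * G 0 s + F r 1 * G 1 s + F r 2 * G 2 s) $$ (i,j)"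
    using ij im dims by (simp add: blk3_def scalar_prod_def sum3)
  finally show "(blk3 M F * blk3 M G) $$ (i,j) = blk3 M (\<lambda>r s. F r 0 * G 0 s + F r 1 * G 1 s + F r 2 * G 2 s) $$ (i,j)" .
qed (auto simp: blk3_def)



lemma blk3_cong: "(\<And>r s. r < 3 \<Longrightarrow> s < 3 \<Longrightarrow> F r s = G r s) \<Longrightarrow> blk3 M F = blk3 M G"
proof -
  assume h: "\<And>r s. r < 3 \<Longrightarrow> s < 3 \<Longrightarrow> F r s = G r s"
  have "i < 3 * M \<Longrightarrow> i div M < 3" for i :: nat
    by (simp add: less_mult_imp_div_less mult.commute)
  then show ?thesis unfolding blk3_def by (intro eq_matI, auto simp: h)
qed

definition Dg :: "nat \<Rightarrow> 'a :: zero mat \<Rightarrow> 'a mat" where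
  "Dg M X = blk3 M (\<lambda>r s. if r = s then X else 0\<^sub>m M M)"

lemma Dg_one: "Dg M (1\<^sub>m M) = (1\<^sub>m (3*M) :: 'a :: {zero,one} mat)"
proof (rule eq_matI)
  fix i j assume "i < dim_row (1\<^sub>m (3*M) :: 'a mat)" "j < dim_col (1\<^sub>m (3*M) :: 'a mat)"
  then have ij: "i < 3*M" "j < 3*M" by auto
  then have M: "M > 0" by auto
  have "(i div M = j div M \<and> i mod M = j mod M) = (i = j)"
    by (metis div_mult_mod_eq)
  then show "Dg M (1\<^sub>m M) $$ (i, j) = (1\<^sub>m (3*M) :: 'a mat) $$ (i, j)"
    using ij M by (auto simp: Dg_def blk3_def)
qed (auto simp: Dg_def blk3_def)

lemma Dg_mult_left:
  fixes F :: "nat \<Rightarrow> nat \<Rightarrow> 'a :: comm_semiring_1 mat"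
  assumes P: "P \<in> carrier_mat M M" and F: "\<And>r s. F r s \<in> carrier_mat M M"
  shows "Dg M P * blk3 M F = blk3 M (\<lambda>r s. P * F r s)"
  unfolding Dg_def
  apply (subst blk3_mult)
    apply (insert P F, auto)[2]
  apply (rule blk3_cong)
  subgoal for r s using P F[of 0 s] F[of 1 s] F[of 2 s]
    by (cases r; cases "r - 1"; auto simp: numeral_2_eq_2)
  done

lemma Dg_mult_right:
  fixes F :: "nat \<Rightarrow> nat \<Rightarrow> 'a :: comm_semiring_1 mat"
  assumes P: "P \<in> carrier_mat M M" and F: "\<And>r s. F r s \<in> carrier_mat M M"
  shows "blk3 M F * Dg M P = blk3 M (\<lambda>r s. F r s * P)"
  unfolding Dg_def
  apply (subst blk3_mult)
    apply (insert P F, auto)[2]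
  apply (rule blk3_cong)
  subgoal for r s using P F[of r 0] F[of r 1] F[of r 2]
    by (cases s; cases "s - 1"; auto simp: numeral_2_eq_2)
  done

lemma Q_block_carrier: "A \<in> carrier_mat M M \<Longrightarrow> Q_block kn kp ku M A r s \<in> carrier_mat M M"
  unfolding Q_block_def by auto

lemma Q_mat_blk3: "Q_mat kn kp ku M A = blk3 M (Q_block kn kp ku M A)"
  unfolding Q_mat_def blk3_def ..

lemma Q_block_conj:
  assumes A: "T \<in> carrier_mat M M" and P: "P \<in> carrier_mat M M" and Pinv: "Pinv \<in> carrier_mat M M"
    and PPi: "P * Pinv = 1\<^sub>m M"
  shows "P * Q_block kn kp ku M T r s * Pinv = Q_block kn kp ku M (P * T * Pinv) r s"
proof -
  have sm: "P * (c \<cdot>\<^sub>m X) * Pinv = c \<cdot>\<^sub>m (P * X * Pinv)" if X: "X \<in> carrier_mat M M" for c X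
  proof -
    have "P * (c \<cdot>\<^sub>m X) = c \<cdot>\<^sub>m (P * X)" by (rule mult_smult_distrib[OF P X])
    moreover have "(c \<cdot>\<^sub>m (P * X)) * Pinv = c \<cdot>\<^sub>m (P * X * Pinv)"
      by (rule mult_smult_assoc_mat, insert P X Pinv, auto)
    ultimately show ?thesis by simp
  qed
  have one: "P * 1\<^sub>m M * Pinv = 1\<^sub>m M" using P PPi by simp
  have zero: "P * 0\<^sub>m M M * Pinv = 0\<^sub>m M M" using P Pinv by simp
  show ?thesis unfolding Q_block_def
    using sm[OF A] sm[OF one_carrier_mat] one zero by (simp split: if_split)
qed

lemma Q_similar:
  assumes A: "A \<in> carrier_mat M M" and T: "T \<in> carrier_mat M M" and sim: "similar_mat A T"
  shows "similar_mat (Q_mat kn kp ku M A) (Q_mat kn kp ku M T)"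
proof -
  from similar_matD[OF sim] obtain n P Pinv where
    c: "{A, T, P, Pinv} \<subseteq> carrier_mat n n" and PPi: "P * Pinv = 1\<^sub>m n" and PiP: "Pinv * P = 1\<^sub>m n"
    and AT: "A = P * T * Pinv" by blast
  from c A have n: "n = M" by auto
  from c n have P: "P \<in> carrier_mat M M" and Pinv: "Pinv \<in> carrier_mat M M" by auto
  show ?thesis
  proof (rule similar_matI[where n = "3*M" and P = "Dg M P" and Q = "Dg M Pinv"])
    show "{Q_mat kn kp ku M A, Q_mat kn kp ku M T, Dg M P, Dg M Pinv} \<subseteq> carrier_mat (3 * M) (3 * M)"
      by (auto simp: Q_mat_blk3 Dg_def)
    have "Dg M P * Dg M Pinv = blk3 M (\<lambda>r s. P * (if r = s then Pinv else 0\<^sub>m M M))"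
      unfolding Dg_def[of M Pinv] by (rule Dg_mult_left[OF P], insert Pinv, auto)
    also have "\<dots> = Dg M (P * Pinv)"
      unfolding Dg_def using P Pinv by (intro blk3_cong, auto)
    finally have "Dg M P * Dg M Pinv = Dg M (P * Pinv)" .
    then show "Dg M P * Dg M Pinv = 1\<^sub>m (3 * M)" using PPi n Dg_one by simp
    have "Dg M Pinv * Dg M P = blk3 M (\<lambda>r s. Pinv * (if r = s then P else 0\<^sub>m M M))"
      unfolding Dg_def[of M P] by (rule Dg_mult_left[OF Pinv], insert P, auto)
    also have "\<dots> = Dg M (Pinv * P)"
      unfolding Dg_def using P Pinv by (intro blk3_cong, auto)
    finally have "Dg M Pinv * Dg M P = Dg M (Pinv * P)" .
    then show "Dg M Pinv * Dg M P = 1\<^sub>m (3 * M)" using PiP n Dg_one by simp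
    show "Q_mat kn kp ku M A = Dg M P * Q_mat kn kp ku M T * Dg M Pinv"
      unfolding Q_mat_blk3 
      using T P Pinv PPi n
      by (simp add: Dg_mult_left Dg_mult_right Q_block_carrier Q_block_conj AT)
  qed
qed



lemma lin_prod: "[:-x, 1:] * [:-y, 1:] = [:x*y, -(x+y), 1::real:]"
  by (simp add: algebra_simps)

lemma mu23:
  assumes kn: "kn > 0" and ku: "ku > 0"
  shows "[:-mu kn kp ku 2 t, 1:] * [:-mu kn kp ku 3 t, 1:] =
     [:(kp/kn*t)*(ku*t) - (ku/(2*kn)*t)^2 - (1/(2*kn))^2, -(kp/kn*t + ku*t), 1:]"
proof -
  define s where "s = sqrt (1 + t\<^sup>2 * k2 kn kp ku)"
  have k2: "k2 kn kp ku \<ge> 0" unfolding k2_def by simp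
  have s2: "s * s = 1 + t\<^sup>2 * k2 kn kp ku" unfolding s_def using k2
    by (simp add: real_sqrt_mult_self)
  have m2: "mu kn kp ku 2 t = (t * k1 kn kp ku - s) / (2*kn)" unfolding mu_def s_def by simp
  have m3: "mu kn kp ku 3 t = (t * k1 kn kp ku + s) / (2*kn)" unfolding mu_def s_def by simp
  have e1: "mu kn kp ku 2 t * mu kn kp ku 3 t = (kp/kn*t)*(ku*t) - (ku/(2*kn)*t)^2 - (1/(2*kn))^2"
  proof -
    have "mu kn kp ku 2 t * mu kn kp ku 3 t = ((t * k1 kn kp ku)^2 - s * s) / (4 * kn^2)"
      unfolding m2 m3 using kn by (simp add: field_simps power2_eq_square)
    also have "\<dots> = (kp/kn*t)*(ku*t) - (ku/(2*kn)*t)^2 - (1/(2*kn))^2"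
      unfolding s2 k1_def k2_def using kn by (simp add: field_simps power2_eq_square)
    finally show ?thesis .
  qed
  have e2: "mu kn kp ku 2 t + mu kn kp ku 3 t = kp/kn*t + ku*t"
    unfolding m2 m3 k1_def using kn by (simp add: field_simps)
  show ?thesis unfolding lin_prod e1 e2 ..
qed



lemma prod13: "(\<Prod>j = (1::nat)..3. f j) = f 1 * f 2 * (f 3 :: 'a :: comm_monoid_mult)"
proof -
  have "{1..(3::nat)} = {1,2,3}" by auto
  then show ?thesis by (simp add: mult.assoc)
qed

lemma det3_g:
  assumes kn: "kn > 0" and ku: "ku > 0" and T: "T \<in> carrier_mat M M" and l: "l < M"
  shows "det (mat 3 3 (\<lambda>(r,s). (if r = s \<and> l = l then [:0,1:] else 0) + [:- Q_block kn kp ku M T r s $$ (l,l):]))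
     = (\<Prod>j = 1..3. [:- mu kn kp ku j (T $$ (l,l)), 1:])"
proof -
  define t where "t = T $$ (l,l)"
  have "det (mat 3 3 (\<lambda>(r,s). (if r = s \<and> l = l then [:0,1:] else 0) + [:- Q_block kn kp ku M T r s $$ (l,l):]))
    = [:-(kp/kn*t), 1:] * ([:-(kp/kn*t), 1:] * [:-(ku*t), 1:] - [:(ku/(2*kn)*t)^2 + (1/(2*kn))^2:])"
    unfolding det_mat3 
    apply (rule poly_eq_poly_eq_iff[THEN iffD1], rule ext)
    using T l by (simp add: Q_block_def t_def algebra_simps power2_eq_square)
  also have "\<dots> = [:-(kp/kn*t), 1:] * ([:-mu kn kp ku 2 t, 1:] * [:-mu kn kp ku 3 t, 1:])"
    unfolding mu23[OF kn ku]
    by (rule arg_cong[where f = "\<lambda>x. _ * x"], rule poly_eq_poly_eq_iff[THEN iffD1], rule ext,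
        simp add: algebra_simps power2_eq_square)
  also have "\<dots> = (\<Prod>j = 1..3. [:- mu kn kp ku j t, 1:])"
  proof -
    have "mu kn kp ku 1 t = kp/kn*t" by (simp add: mu_def)
    then show ?thesis unfolding prod13 by (simp only: mult.assoc)
  qed
  finally show ?thesis unfolding t_def .
qed



lemma part1:
  fixes A :: "real mat"
  assumes A: "A \<in> carrier_mat M M"
    and cpA: "char_poly A = (\<Prod>i = 1..M. [:- lam i, 1:])"
    and kn: "kn > 0" and ku: "ku > 0"
  shows "char_poly (Q_mat kn kp ku M A) = (\<Prod>i = 1..M. \<Prod>j = 1..3. [:- mu kn kp ku j (lam i), 1:])"
proof -
  define es where "es = map lam [1..<Suc M]"
  have cp: "char_poly A = (\<Prod>e \<leftarrow> es. [:- e, 1:])"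
  proof -
    have "(\<Prod>e \<leftarrow> es. [:- e, 1:]) = (\<Prod>i \<leftarrow> [1..<Suc M]. [:- lam i, 1:])"
      by (simp add: es_def o_def)
    also have "\<dots> = (\<Prod>i \<in> set [1..<Suc M]. [:- lam i, 1:])"
      by (rule prod.distinct_set_conv_list[symmetric], simp)
    also have "set [1..<Suc M] = {1..M}" by auto
    finally show ?thesis unfolding cpA by simp
  qed
  obtain T P Pinv where sch: "schur_decomposition A es = (T, P, Pinv)" by (cases "schur_decomposition A es", auto)
  from schur_decomposition[OF A cp sch] have sim: "similar_mat_wit A T P Pinv"
    and ut: "upper_triangular T" and dg: "diag_mat T = es" by auto
  from similar_mat_witD2[OF A sim] have T: "T \<in> carrier_mat M M" by auto
  have simT: "similar_mat A T" using sim unfolding similar_mat_def by auto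
  have Tll: "T $$ (l,l) = lam (Suc l)" if "l < M" for l
  proof -
    have "diag_mat T ! l = es ! l" using dg by simp
    moreover have "es ! l = lam (Suc l)" unfolding es_def using that by (simp del: upt_Suc)
    ultimately show ?thesis using that T unfolding diag_mat_def by auto
  qed
  have "char_poly (Q_mat kn kp ku M A) = char_poly (Q_mat kn kp ku M T)"
    by (rule char_poly_similar[OF Q_similar[OF A T simT]])
  also have "\<dots> = det (char_poly_matrix (Q_mat kn kp ku M T))" unfolding char_poly_def ..
  also have "\<dots> = det (mat (3*M) (3*M) (\<lambda>(i,j). char_poly_matrix (Q_mat kn kp ku M T) $$
       ((i mod 3) * M + i div 3, (j mod 3) * M + j div 3)))"
  proof (rule det_perm_sym[symmetric])
    show "char_poly_matrix (Q_mat kn kp ku M T) \<in> carrier_mat (3*M) (3*M)"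
      by (rule char_poly_matrix_closed, simp add: Q_mat_def)
    show "(i mod 3) * M + i div 3 < 3 * M" if "i < 3 * M" for i
    proof -
      have "i div 3 < M" using that by auto
      moreover have "i mod 3 \<le> 2" by auto
      ultimately have "(i mod 3) * M + i div 3 < (i mod 3) * M + M" by simp
      also have "\<dots> = (i mod 3 + 1) * M" by simp
      also have "\<dots> \<le> 3 * M" using \<open>i mod 3 \<le> 2\<close> by (intro mult_right_mono, auto)
      finally show ?thesis .
    qed
    show "inj_on (\<lambda>i. (i mod 3) * M + i div 3) {..<3*M}"
    proof (rule inj_onI)
      fix i j assume i: "i \<in> {..<3*M}" and j: "j \<in> {..<3*M}" and e: "(i mod 3) * M + i div 3 = (j mod 3) * M + j div 3"
      have id: "i div 3 < M" "j div 3 < M" using i j by auto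
      from arg_cong[OF e, of "\<lambda>x. x mod M"] id have d: "i div 3 = j div 3" by simp
      from arg_cong[OF e, of "\<lambda>x. x div M"] id have m: "i mod 3 = j mod 3" by simp
      show "i = j" using d m by (metis div_mult_mod_eq)
    qed
  qed
  also have "\<dots> = det (Kmat M (\<lambda>r s a b. (if r = s \<and> a = b then [:0,1:] else 0) + [:- Q_block kn kp ku M T r s $$ (a,b):]))"
  proof (rule arg_cong[where f = det], rule eq_matI)
    fix i j assume "i < dim_row (Kmat M (\<lambda>r s a b. (if r = s \<and> a = b then [:0,1:] else 0) + [:- Q_block kn kp ku M T r s $$ (a,b):]))"
      "j < dim_col (Kmat M (\<lambda>r s a b. (if r = s \<and> a = b then [:0,1:] else 0) + [:- Q_block kn kp ku M T r s $$ (a,b):]))"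
    then have ij: "i < 3*M" "j < 3*M" by (auto simp: Kmat_def)
    then have id: "i div 3 < M" "j div 3 < M" by auto
    have lt: "(x mod 3) * M + x div 3 < 3 * M" if "x < 3*M" for x
    proof -
      have "x div 3 < M" using that by auto
      moreover have "x mod 3 \<le> 2" by auto
      ultimately have "(x mod 3) * M + x div 3 < (x mod 3) * M + M" by simp
      also have "\<dots> = (x mod 3 + 1) * M" by simp
      also have "\<dots> \<le> 3 * M" using \<open>x mod 3 \<le> 2\<close> by (intro mult_right_mono, auto)
      finally show ?thesis .
    qed
    have dm: "((x mod 3) * M + x div 3) div M = x mod 3" "((x mod 3) * M + x div 3) mod M = x div 3"
      if "x div 3 < M" for x using that by auto
    have eqv: "((i mod 3) * M + i div 3 = (j mod 3) * M + j div 3) = (i mod 3 = j mod 3 \<and> i div 3 = j div 3)"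
      using dm[OF id(1)] dm[OF id(2)] by metis
    show "mat (3*M) (3*M) (\<lambda>(i,j). char_poly_matrix (Q_mat kn kp ku M T) $$
       ((i mod 3) * M + i div 3, (j mod 3) * M + j div 3)) $$ (i,j) =
      Kmat M (\<lambda>r s a b. (if r = s \<and> a = b then [:0,1:] else 0) + [:- Q_block kn kp ku M T r s $$ (a,b):]) $$ (i,j)"
      using ij lt[OF ij(1)] lt[OF ij(2)] dm[OF id(1)] dm[OF id(2)] eqv
      by (simp add: Kmat_def char_poly_matrix_def Q_mat_def)
  qed (auto simp: Kmat_def)
  also have "\<dots> = (\<Prod>l<M. det (mat 3 3 (\<lambda>(r,s). (if r = s \<and> l = l then [:0,1:] else 0) + [:- Q_block kn kp ku M T r s $$ (l,l):])))"
  proof (rule det_Kmat)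
    fix r s a b assume ba: "b < a" and a: "a < M"
    have "Q_block kn kp ku M T r s $$ (a,b) = 0"
      unfolding Q_block_def using ba a T upper_triangularD[OF ut ba] by auto
    then show "(if r = s \<and> a = b then [:0,1:] else 0) + [:- Q_block kn kp ku M T r s $$ (a,b):] = 0"
      using ba by simp
  qed
  also have "\<dots> = (\<Prod>l<M. \<Prod>j = 1..3. [:- mu kn kp ku j (lam (Suc l)), 1:])"
    apply (rule prod.cong[OF refl])
    subgoal for l using det3_g[OF kn ku T, of l] Tll[of l] by simp
    done
  also have "\<dots> = (\<Prod>i = 1..M. \<Prod>j = 1..3. [:- mu kn kp ku j (lam i), 1:])"
    by (simp add: prod.atLeast1_atMost_eq)
  finally show ?thesis .
qed



lemma k12: "(k1 kn kp ku)^2 - k2 kn kp ku = 4*kn*kp*ku - ku^2"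
  unfolding k1_def k2_def by (simp add: algebra_simps power2_eq_square)

lemma k2_nonneg: "k2 kn kp ku \<ge> 0" unfolding k2_def by simp

lemma sqrt_ge: "sqrt (1 + x^2 * k) \<ge> \<bar>x\<bar> * sqrt k" if "k \<ge> 0" for x k :: real
proof -
  have "\<bar>x\<bar> * sqrt k = sqrt (x^2 * k)" by (simp add: real_sqrt_mult)
  also have "\<dots> \<le> sqrt (1 + x^2 * k)" by (rule real_sqrt_le_mono, simp)
  finally show ?thesis .
qed

lemma mu2_le_mu3: "mu kn kp ku 2 x \<le> mu kn kp ku 3 x" if "kn > 0"
proof -
  have "1 + x^2 * k2 kn kp ku \<ge> 0" using k2_nonneg[of kn kp ku] by (metis add_nonneg_nonneg mult_nonneg_nonneg zero_le_one zero_le_power2)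
  then show ?thesis using that by (simp add: mu_def, intro divide_right_mono, auto)
qed

lemma mu1_le_mu3: assumes "kn > 0" shows "mu kn kp ku 1 x \<le> mu kn kp ku 3 x"
proof -
  have "sqrt (k2 kn kp ku) \<ge> \<bar>kp - kn*ku\<bar>"
    unfolding k2_def by (rule real_le_rsqrt, simp)
  then have "\<bar>x\<bar> * sqrt (k2 kn kp ku) \<ge> \<bar>x\<bar> * \<bar>kp - kn*ku\<bar>" by (simp add: mult_left_mono)
  moreover have "\<bar>x\<bar> * \<bar>kp - kn*ku\<bar> \<ge> x * (kp - kn*ku)" by (metis abs_ge_self abs_mult)
  ultimately have b: "sqrt (1 + x^2 * k2 kn kp ku) \<ge> x * (kp - kn * ku)"
    using sqrt_ge[OF k2_nonneg, of x kn kp ku] by linarith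
  have "2 * kn * (kp / kn * x) \<le> x * k1 kn kp ku + sqrt (1 + x\<^sup>2 * k2 kn kp ku)"
    using b assms unfolding k1_def by (simp add: algebra_simps)
  then show ?thesis unfolding mu_def using assms by (simp add: field_simps)
qed

lemma mu3_neg:
  assumes kn: "kn > 0" and kp: "kp > 0" and ku: "ku > 0" and x: "x < 0"
    and c: "x^2 * (4*kn*kp*ku - ku^2) > 1"
  shows "mu kn kp ku 3 x < 0"
proof -
  have k1: "k1 kn kp ku > 0" unfolding k1_def using kn kp ku by (simp add: add_pos_pos)
  have e: "x^2 * (k1 kn kp ku)^2 - x^2 * k2 kn kp ku = x^2 * (4*kn*kp*ku - ku^2)"
    using k12[of kn kp ku] by (metis right_diff_distrib)
  have "1 + x^2 * k2 kn kp ku < (x * k1 kn kp ku)^2"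
    using c e unfolding power_mult_distrib by linarith
  then have "sqrt (1 + x^2 * k2 kn kp ku) < sqrt ((x * k1 kn kp ku)^2)"
    by (rule real_sqrt_less_mono)
  also have "\<dots> = - (x * k1 kn kp ku)" using abs_of_neg[OF mult_neg_pos[OF x k1]] by simp
  finally have "x * k1 kn kp ku + sqrt (1 + x^2 * k2 kn kp ku) < 0" by simp
  then show ?thesis unfolding mu_def using kn by (simp add: divide_neg_pos)
qed

lemma mu3_mono:
  assumes kn: "kn > 0" and kp: "kp > 0" and ku: "ku > 0" and yx: "y \<le> x" and x: "x < 0"
    and c: "4*kn*kp*ku - ku^2 > 0"
  shows "mu kn kp ku 3 y \<le> mu kn kp ku 3 x"
proof -
  define K1 where "K1 = k1 kn kp ku"
  define K2 where "K2 = k2 kn kp ku"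
  define s where "s = sqrt K2"
  define a where "a = sqrt (1 + y^2 * K2)"
  define b where "b = sqrt (1 + x^2 * K2)"
  have K2: "K2 \<ge> 0" unfolding K2_def by (rule k2_nonneg)
  have K1: "K1 > 0" unfolding K1_def k1_def using kn kp ku by (simp add: add_pos_pos)
  have s2: "s * s = K2" unfolding s_def using K2 by simp
  have s0: "s \<ge> 0" unfolding s_def using K2 by simp
  have K12: "K1^2 > K2" using c k12[of kn kp ku] unfolding K1_def K2_def by simp
  have K1s: "K1 \<ge> s"
  proof -
    have "s = sqrt K2" by (simp add: s_def)
    also have "\<dots> \<le> sqrt (K1^2)" using K12 by (intro real_sqrt_le_mono, simp)
    also have "\<dots> = K1" using K1 by simp
    finally show ?thesis .
  qed
  have a2: "a * a = 1 + y^2 * K2" unfolding a_def using K2 by simp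
  have b2: "b * b = 1 + x^2 * K2" unfolding b_def using K2 by simp
  have "1 + y^2 * K2 \<ge> 0" using K2 by (metis add_nonneg_nonneg mult_nonneg_nonneg zero_le_one zero_le_power2)
  then have a0: "a \<ge> 0" unfolding a_def by simp
  have bx: "b \<ge> - x * s" using sqrt_ge[OF K2, of x] x unfolding b_def s_def by simp
  have bk: "b * K1 \<ge> - x * K2"
  proof -
    have "b * K1 \<ge> (- x * s) * K1" using bx K1 by (intro mult_right_mono, auto)
    moreover have "(- x * s) * K1 \<ge> (- x * s) * s" using K1s x s0 by (intro mult_left_mono, auto simp: mult_nonpos_nonneg)
    moreover have "(- x * s) * s = - x * K2" using s2 by (simp add: algebra_simps)
    ultimately show ?thesis by linarith
  qed
  have key: "(y^2 - x^2) * K2 \<le> 2 * b * (x - y) * K1 + (x - y)^2 * K1^2"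
  proof -
    have e1: "(y^2 - x^2) * K2 = (x - y) * (-(x + y) * K2)" by (simp add: algebra_simps power2_eq_square)
    have e2: "-(x + y) * K2 = 2 * (- x * K2) + (x - y) * K2" by (simp add: algebra_simps)
    have le: "2 * (- x * K2) + (x - y) * K2 \<le> 2 * (b * K1) + (x - y) * K1^2" using bk K12 yx
    proof -
      have "(x - y) * K2 \<le> (x - y) * K1^2" using K12 yx by (intro mult_left_mono, auto)
      then show ?thesis using bk by linarith
    qed
    have "(y^2 - x^2) * K2 \<le> (x - y) * (2 * (b * K1) + (x - y) * K1^2)"
      unfolding e1 e2 using yx le by (intro mult_left_mono, auto)
    then show ?thesis by (simp add: algebra_simps power2_eq_square)
  qed
  have rhs0: "b + (x - y) * K1 \<ge> 0"
  proof -
    have "0 \<le> (- x) * s" using x s0 by (intro mult_nonneg_nonneg, auto)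
    moreover have "0 \<le> (x - y) * K1" using yx K1 by (intro mult_nonneg_nonneg, auto)
    ultimately show ?thesis using bx by linarith
  qed
  have "a * a \<le> (b + (x - y) * K1) * (b + (x - y) * K1)"
    using key a2 b2 by (simp add: algebra_simps power2_eq_square)
  then have "a \<le> b + (x - y) * K1" using a0 rhs0 by (meson mult_mono not_le mult_strict_mono')
  then have "y * K1 + a \<le> x * K1 + b" by (simp add: algebra_simps)
  then show ?thesis unfolding mu_def a_def b_def K1_def K2_def using kn by (simp add: divide_right_mono)
qed



lemma chain_le:
  fixes lam :: "nat \<Rightarrow> real"
  assumes ch: "\<forall>i \<in> {1..<M}. lam i \<le> lam (Suc i)" and i: "1 \<le> i" "i \<le> M"
  shows "lam i \<le> lam M"
proof -
  have "\<forall>d. d \<le> M - 1 \<longrightarrow> lam (M - d) \<le> lam M"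
  proof (intro allI)
    fix d show "d \<le> M - 1 \<longrightarrow> lam (M - d) \<le> lam M"
    proof (induction d)
      case 0 then show ?case by simp
    next
      case (Suc d)
      show ?case
      proof
        assume d: "Suc d \<le> M - 1"
        then have "M - Suc d \<in> {1..<M}" by auto
        then have "lam (M - Suc d) \<le> lam (Suc (M - Suc d))" using ch by blast
        also have "Suc (M - Suc d) = M - d" using d by auto
        finally show "lam (M - Suc d) \<le> lam M" using Suc d by auto
      qed
    qed
  qed
  from this[rule_format, of "M - i"] i show ?thesis by auto
qed

theorem lemma1:
  fixes A :: "real mat" and M :: nat and lam :: "nat \<Rightarrow> real" and kn kp ku :: real
  assumes "A \<in> carrier_mat M M"
    and "transpose_mat A = A"
    and "char_poly A = (\<Prod>i = 1..M. [:- lam i, 1:])"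
    and "kn > 0" and "kp > 0" and "ku > 0"
  shows "char_poly (Q_mat kn kp ku M A) =
           (\<Prod>i = 1..M. \<Prod>j = 1..3. [:- mu kn kp ku j (lam i), 1:])
         \<and> k1 kn kp ku > 0 \<and> k2 kn kp ku > 0
         \<and> ((M \<ge> 1 \<and> (\<forall>i \<in> {1..<M}. lam i \<le> lam (Suc i)) \<and> lam M < 0
              \<and> (lam M)\<^sup>2 * (4 * kn * kp * ku - ku\<^sup>2) > 1)
            \<longrightarrow> (\<forall>j \<in> {1..3}. \<forall>i \<in> {1..M}. mu kn kp ku j (lam i) < 0)
                \<and> mu kn kp ku 3 (lam M) =
                    Max {mu kn kp ku j (lam i) | j i. j \<in> {1..3} \<and> i \<in> {1..M}})"
proof (intro conjI impI)
  note kn = \<open>kn > 0\<close> and kp = \<open>kp > 0\<close> and ku = \<open>ku > 0\<close>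
  show "char_poly (Q_mat kn kp ku M A) = (\<Prod>i = 1..M. \<Prod>j = 1..3. [:- mu kn kp ku j (lam i), 1:])"
    by (rule part1[OF assms(1) assms(3) kn ku])
  show "k1 kn kp ku > 0" unfolding k1_def using kn kp ku by (simp add: add_pos_pos)
  show "k2 kn kp ku > 0" unfolding k2_def using ku by (simp add: add_pos_nonneg)
  assume H: "M \<ge> 1 \<and> (\<forall>i \<in> {1..<M}. lam i \<le> lam (Suc i)) \<and> lam M < 0
              \<and> (lam M)\<^sup>2 * (4 * kn * kp * ku - ku\<^sup>2) > 1"
  then have M1: "M \<ge> 1" and ch: "\<forall>i \<in> {1..<M}. lam i \<le> lam (Suc i)" and lM: "lam M < 0"
    and cM: "(lam M)\<^sup>2 * (4 * kn * kp * ku - ku\<^sup>2) > 1" by auto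
  have c: "4 * kn * kp * ku - ku\<^sup>2 > 0"
  proof (rule ccontr)
    assume "\<not> ?thesis"
    then have "(lam M)\<^sup>2 * (4 * kn * kp * ku - ku\<^sup>2) \<le> 0"
      by (intro mult_nonneg_nonpos, auto)
    with cM show False by simp
  qed
  have le: "lam i \<le> lam M" if "i \<in> {1..M}" for i using chain_le[OF ch] that by auto
  have neg: "lam i < 0" if "i \<in> {1..M}" for i using le[OF that] lM by simp
  have ci: "(lam i)\<^sup>2 * (4 * kn * kp * ku - ku\<^sup>2) > 1" if "i \<in> {1..M}" for i
  proof -
    have "(- lam M)\<^sup>2 \<le> (- lam i)\<^sup>2"
      using le[OF that] lM by (intro power_mono, auto)
    then have "(lam M)\<^sup>2 \<le> (lam i)\<^sup>2" by simp
    then have "(lam M)\<^sup>2 * (4 * kn * kp * ku - ku\<^sup>2) \<le> (lam i)\<^sup>2 * (4 * kn * kp * ku - ku\<^sup>2)"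
      using c by (intro mult_right_mono, auto)
    then show ?thesis using cM by simp
  qed
  have m3: "mu kn kp ku 3 (lam i) < 0" if "i \<in> {1..M}" for i
    by (rule mu3_neg[OF kn kp ku neg[OF that] ci[OF that]])
  show "\<forall>j \<in> {1..3}. \<forall>i \<in> {1..M}. mu kn kp ku j (lam i) < 0"
  proof (intro ballI)
    fix j i assume j: "j \<in> {1..3::nat}" and i: "i \<in> {1..M}"
    have "mu kn kp ku j (lam i) \<le> mu kn kp ku 3 (lam i)"
    proof -
      have "j = 1 \<or> j = 2 \<or> j = 3" using j by auto
      then show ?thesis using mu1_le_mu3[OF kn] mu2_le_mu3[OF kn] by auto
    qed
    then show "mu kn kp ku j (lam i) < 0" using m3[OF i] by simp
  qed
  let ?S = "{mu kn kp ku j (lam i) | j i. j \<in> {1..3::nat} \<and> i \<in> {1..M}}"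
  show "mu kn kp ku 3 (lam M) = Max ?S"
  proof (rule Max_eqI[symmetric])
    have "?S = (\<lambda>(j,i). mu kn kp ku j (lam i)) ` ({1..3::nat} \<times> {1..M})" by (auto; blast)
    then show "finite ?S" by simp
    show "mu kn kp ku 3 (lam M) \<in> ?S" using M1 by (intro CollectI exI[of _ 3] exI[of _ M], auto)
    fix y assume "y \<in> ?S"
    then obtain j i where y: "y = mu kn kp ku j (lam i)" and j: "j \<in> {1..3::nat}" and i: "i \<in> {1..M}" by auto
    have "mu kn kp ku j (lam i) \<le> mu kn kp ku 3 (lam i)"
    proof -
      have "j = 1 \<or> j = 2 \<or> j = 3" using j by auto
      then show ?thesis using mu1_le_mu3[OF kn] mu2_le_mu3[OF kn] by auto
    qed
    also have "\<dots> \<le> mu kn kp ku 3 (lam M)" by (rule mu3_mono[OF kn kp ku le[OF i] lM c])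
    finally show "y \<le> mu kn kp ku 3 (lam M)" using y by simp
  qed
qed


end
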